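(* Let $n\ge1$ and $\sigma_n=1+2+\dots+2^{n-1}$. The function $\Phi_n(x,y,a)=a^{\sigma_n}\,\phi_{a,-}\big(f_a^{-n}(x,y)\big)$, defined for $0<|a|<R$ and $(x,y)\in f_a^{n}(V_-)$, extends to a holomorphic function on the open set $$\mathcal D_{-,n}=\{(x,y,a): 0<|a|<R,\ (x,y)\in f_a^n(V_-)\}\cup\{(x,y,0): p(y)\ne x\},$$ and its value at $a=0$ is $\Phi_n(x,y,0)=(p(y)-x)^{2^{n-1}}$.
   Context: Let $c\in\mathbb C$, $p(x)=x^2+c$, $f_a(x,y)=(p(x)-ay,\,x)$ with $f_a^{-1}(x,y)=(y,(p(y)-x)/a)$ for $a\ne0$. Fix $R>0$, $0<\rho<1$, $\alpha>0$ such that for all $|y|\ge\alpha$: $\frac{|c|}{|y|^2}+\frac{R+1}{|y|}<\rho$ and $|p(y)|>(2R+1)|y|$. $V_-=\{|y|>|x|,\ |y|>\alpha\}$. For $(x,y)\in V_-$, $0<|a|<R$, with $(x_{-k},y_{-k})=f_a^{-k}(x,y)$, $y_0=y$: $\phi_{a,-}(x,y)=y\exp\big(\sum_{k\ge1}2^{-k}\log\frac{a y_{-k}}{y_{-(k-1)}^2}\big)$ (principal branch), a holomorphic function. *)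

theory Defs
  imports "HOL-Analysis.Analysis"
begin

definition pq :: "complex \<Rightarrow> complex \<Rightarrow> complex" where
  "pq c x = x^2 + c"

definition henon :: "complex \<Rightarrow> complex \<Rightarrow> complex \<times> complex \<Rightarrow> complex \<times> complex" where
  "henon c a = (\<lambda>(x,y). (pq c x - a * y, x))"

definition henon_inv :: "complex \<Rightarrow> complex \<Rightarrow> complex \<times> complex \<Rightarrow> complex \<times> complex" where
  "henon_inv c a = (\<lambda>(x,y). (y, (pq c y - x) / a))"

definition Vminus :: "real \<Rightarrow> (complex \<times> complex) set" where
  "Vminus \<alpha> = {(x,y). cmod y > cmod x \<and> cmod y > \<alpha>}"

definition yback :: "complex \<Rightarrow> complex \<Rightarrow> complex \<times> complex \<Rightarrow> nat \<Rightarrow> complex" where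
  "yback c a z k = snd ((henon_inv c a ^^ k) z)"

definition phi_minus :: "complex \<Rightarrow> complex \<Rightarrow> complex \<times> complex \<Rightarrow> complex" where
  "phi_minus c a z = snd z * exp (\<Sum>k. (1/2) ^ (Suc k) *
      Ln (a * yback c a z (Suc k) / (yback c a z k)^2))"

definition cscale3 :: "complex \<Rightarrow> complex \<times> complex \<times> complex \<Rightarrow> complex \<times> complex \<times> complex" where
  "cscale3 w = (\<lambda>(x,y,a). (w*x, w*y, w*a))"

definition holomorphic3_on :: "(complex \<times> complex \<times> complex \<Rightarrow> complex) \<Rightarrow> (complex \<times> complex \<times> complex) set \<Rightarrow> bool" where
  "holomorphic3_on F S \<longleftrightarrow> (\<forall>z\<in>S. \<exists>L. (F has_derivative L) (at z) \<and> (\<forall>w v. L (cscale3 w v) = w * L v))"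

definition Dminus :: "complex \<Rightarrow> real \<Rightarrow> real \<Rightarrow> nat \<Rightarrow> (complex \<times> complex \<times> complex) set" where
  "Dminus c R \<alpha> n =
     {(x,y,a). 0 < cmod a \<and> cmod a < R \<and> (x,y) \<in> (henon c a ^^ n) ` Vminus \<alpha>}
     \<union> {(x,y,a). a = 0 \<and> pq c y \<noteq> x}"

end

theory Submission
  imports Defs "HOL-Analysis.Analysis"
begin


definition clin :: "(complex \<times> complex \<times> complex \<Rightarrow> complex) \<Rightarrow> bool" where
  "clin L \<longleftrightarrow> (\<forall>w v. L (cscale3 w v) = w * L v)"

lemma hol3_def2: "holomorphic3_on F S \<longleftrightarrow> (\<forall>z\<in>S. \<exists>L. (F has_derivative L) (at z) \<and> clin L)"
  unfolding holomorphic3_on_def clin_def by simp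

lemma hol3_subset: "holomorphic3_on F S \<Longrightarrow> T \<subseteq> S \<Longrightarrow> holomorphic3_on F T"
  unfolding holomorphic3_on_def by blast

lemma hol3_const: "holomorphic3_on (\<lambda>z. k) S"
  unfolding hol3_def2 clin_def by (auto intro!: exI[of _ "\<lambda>h. 0"])

lemma hol3_x: "holomorphic3_on (\<lambda>z. fst z) S"
  unfolding hol3_def2 clin_def
  by (auto intro!: exI[of _ "\<lambda>h. fst h"] derivative_eq_intros simp: cscale3_def split: prod.splits)

lemma hol3_y: "holomorphic3_on (\<lambda>z. fst (snd z)) S"
  unfolding hol3_def2 clin_def
  by (auto intro!: exI[of _ "\<lambda>h. fst (snd h)"] derivative_eq_intros simp: cscale3_def split: prod.splits)

lemma hol3_a: "holomorphic3_on (\<lambda>z. snd (snd z)) S"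
  unfolding hol3_def2 clin_def
  by (auto intro!: exI[of _ "\<lambda>h. snd (snd h)"] derivative_eq_intros simp: cscale3_def split: prod.splits)

lemma hol3_binop:
  assumes f: "holomorphic3_on f S" and g: "holomorphic3_on g S"
    and D: "\<And>z L1 L2. z \<in> S \<Longrightarrow> (f has_derivative L1) (at z) \<Longrightarrow> (g has_derivative L2) (at z) \<Longrightarrow> clin L1 \<Longrightarrow> clin L2
        \<Longrightarrow> \<exists>L. ((\<lambda>z. F (f z) (g z)) has_derivative L) (at z) \<and> clin L"
  shows "holomorphic3_on (\<lambda>z. F (f z) (g z)) S"
  unfolding hol3_def2
proof
  fix z assume z: "z \<in> S"
  obtain L1 where L1: "(f has_derivative L1) (at z)" "clin L1" using f z unfolding hol3_def2 by blast
  obtain L2 where L2: "(g has_derivative L2) (at z)" "clin L2" using g z unfolding hol3_def2 by blast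
  show "\<exists>L. ((\<lambda>z. F (f z) (g z)) has_derivative L) (at z) \<and> clin L" using D[OF z L1(1) L2(1) L1(2) L2(2)] .
qed

lemma hol3_add: "holomorphic3_on f S \<Longrightarrow> holomorphic3_on g S \<Longrightarrow> holomorphic3_on (\<lambda>z. f z + g z) S"
  apply (rule hol3_binop[where F="(+)"], assumption+)
  subgoal for z L1 L2 by (rule exI[of _ "\<lambda>h. L1 h + L2 h"]) (auto intro!: derivative_eq_intros simp: distrib_left clin_def)
  done

lemma hol3_diff: "holomorphic3_on f S \<Longrightarrow> holomorphic3_on g S \<Longrightarrow> holomorphic3_on (\<lambda>z. f z - g z) S"
  apply (rule hol3_binop[where F="(-)"], assumption+)
  subgoal for z L1 L2 by (rule exI[of _ "\<lambda>h. L1 h - L2 h"]) (auto intro!: derivative_eq_intros simp: right_diff_distrib clin_def)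
  done

lemma hol3_mult: "holomorphic3_on f S \<Longrightarrow> holomorphic3_on g S \<Longrightarrow> holomorphic3_on (\<lambda>z. f z * g z) S"
  apply (rule hol3_binop[where F="(*)"], assumption+)
  subgoal for z L1 L2 by (rule exI[of _ "\<lambda>h. f z * L2 h + L1 h * g z"]) (auto intro!: derivative_eq_intros simp: algebra_simps clin_def)
  done

lemma hol3_power: "holomorphic3_on f S \<Longrightarrow> holomorphic3_on (\<lambda>z. f z ^ m) S"
  by (induction m) (auto intro: hol3_mult hol3_const)

lemma hol3_comp1:
  assumes "holomorphic3_on f S" "\<And>z. z \<in> S \<Longrightarrow> (g has_field_derivative g' z) (at (f z))"
  shows "holomorphic3_on (\<lambda>z. g (f z)) S"
  unfolding hol3_def2 clin_def
proof
  fix z assume z: "z \<in> S"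
  then obtain L where L: "(f has_derivative L) (at z)" "\<And>w v. L (cscale3 w v) = w * L v"
    using assms(1) unfolding hol3_def2 clin_def by blast
  have "((\<lambda>z. g (f z)) has_derivative (\<lambda>h. g' z * L h)) (at z)"
    using diff_chain_at[OF L(1) assms(2)[OF z, unfolded has_field_derivative_def]] by (simp add: o_def)
  then show "\<exists>L. ((\<lambda>z. g (f z)) has_derivative L) (at z) \<and> (\<forall>w v. L (cscale3 w v) = w * L v)"
    using L(2) by (intro exI[of _ "\<lambda>h. g' z * L h"]) (auto simp: algebra_simps)
qed

lemma hol3_exp: "holomorphic3_on f S \<Longrightarrow> holomorphic3_on (\<lambda>z. exp (f z)) S"
  by (rule hol3_comp1[where g'="\<lambda>z. exp (f z)"]) (auto intro: DERIV_exp)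

lemma hol3_inverse: "holomorphic3_on f S \<Longrightarrow> (\<And>z. z \<in> S \<Longrightarrow> f z \<noteq> 0) \<Longrightarrow> holomorphic3_on (\<lambda>z. inverse (f z)) S"
  by (rule hol3_comp1[where g'="\<lambda>z. - inverse (f z ^ 2)"]) (auto intro!: derivative_eq_intros simp: power2_eq_square)

lemma hol3_divide: "holomorphic3_on f S \<Longrightarrow> holomorphic3_on g S \<Longrightarrow> (\<And>z. z \<in> S \<Longrightarrow> g z \<noteq> 0) \<Longrightarrow> holomorphic3_on (\<lambda>z. f z / g z) S"
  unfolding divide_inverse by (intro hol3_mult hol3_inverse)

lemma hol3_compose3:
  assumes H: "holomorphic3_on H T" and f1: "holomorphic3_on f1 S" and f2: "holomorphic3_on f2 S"
    and f3: "holomorphic3_on f3 S" and inT: "\<And>z. z \<in> S \<Longrightarrow> (f1 z, f2 z, f3 z) \<in> T"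
  shows "holomorphic3_on (\<lambda>z. H (f1 z, f2 z, f3 z)) S"
  unfolding hol3_def2
proof
  fix z assume z: "z \<in> S"
  obtain L1 where L1: "(f1 has_derivative L1) (at z)" "clin L1" using f1 z unfolding hol3_def2 by blast
  obtain L2 where L2: "(f2 has_derivative L2) (at z)" "clin L2" using f2 z unfolding hol3_def2 by blast
  obtain L3 where L3: "(f3 has_derivative L3) (at z)" "clin L3" using f3 z unfolding hol3_def2 by blast
  obtain LH where LH: "(H has_derivative LH) (at (f1 z, f2 z, f3 z))" "clin LH" using H inT[OF z] unfolding hol3_def2 by blast
  have d: "((\<lambda>z. (f1 z, f2 z, f3 z)) has_derivative (\<lambda>h. (L1 h, L2 h, L3 h))) (at z)"
    by (intro has_derivative_Pair L1 L2 L3)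
  have "((\<lambda>z. H (f1 z, f2 z, f3 z)) has_derivative (\<lambda>h. LH (L1 h, L2 h, L3 h))) (at z)"
    using diff_chain_at[OF d LH(1)] by (simp add: o_def)
  moreover have "clin (\<lambda>h. LH (L1 h, L2 h, L3 h))"
    using L1(2) L2(2) L3(2) LH(2) unfolding clin_def
    by (metis (no_types, lifting) cscale3_def case_prod_conv)
  ultimately show "\<exists>L. ((\<lambda>z. H (f1 z, f2 z, f3 z)) has_derivative L) (at z) \<and> clin L" by blast
qed

lemma hol3_continuous: "holomorphic3_on f S \<Longrightarrow> z \<in> S \<Longrightarrow> isCont f z"
  unfolding holomorphic3_on_def using has_derivative_continuous by blast



definition sgm :: "nat \<Rightarrow> nat" where "sgm m = (\<Sum>k<m. 2^k)"
definition tau :: "nat \<Rightarrow> nat" where "tau m = 2^(m-1) - 1"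
definition ee :: "nat \<Rightarrow> nat" where "ee m = 2 * sgm m - tau m"

lemma sgm_eq: "sgm m = 2^m - 1"
  unfolding sgm_def by (induction m) auto

lemma sgm_Suc: "sgm (Suc m) = 2 * sgm m + 1"
proof -
  obtain t where t: "(2::nat)^m = Suc t" using not0_implies_Suc[of "(2::nat)^m"] by auto
  then show ?thesis unfolding sgm_eq by simp
qed

lemma tau_le: "tau m \<le> 2 * sgm m"
  unfolding tau_def sgm_eq by (cases m) auto

lemma tau_Suc: "tau (Suc m) = sgm m" unfolding tau_def sgm_eq by simp

lemma sgm_pos: "m \<ge> 1 \<Longrightarrow> sgm m \<ge> 1"
proof -
  assume "m \<ge> 1"
  then obtain k where k: "m = Suc k" by (cases m) auto
  obtain t where t: "(2::nat)^k = Suc t" using not0_implies_Suc[of "(2::nat)^k"] by auto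
  then show ?thesis unfolding sgm_eq k by simp
qed

lemma ee_pos: "m \<ge> 1 \<Longrightarrow> ee m \<ge> 1"
  unfolding ee_def tau_def sgm_eq
proof -
  assume "m \<ge> 1"
  then obtain k where k: "m = Suc k" by (cases m) auto
  obtain t where t: "(2::nat)^k = Suc t" using not0_implies_Suc[of "(2::nat)^k"] by auto
  then show "1 \<le> 2 * (2 ^ m - 1) - (2 ^ (m - 1) - 1 :: nat)" unfolding k by simp
qed

lemma tau_sg: "m \<ge> 1 \<Longrightarrow> 2^(m-1) + tau m = sgm m"
  unfolding tau_def sgm_eq by (cases m) auto

fun PP :: "complex \<Rightarrow> complex \<times> complex \<times> complex \<Rightarrow> nat \<Rightarrow> complex \<times> complex" where
  "PP c z 0 = (fst z, fst (snd z))"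
| "PP c z (Suc m) = (snd (PP c z m), (snd (PP c z m))^2 + c * (snd (snd z))^(2 * sgm m)
                      - fst (PP c z m) * (snd (snd z))^(ee m))"

lemma henon_inv_simp: "henon_inv c a (X, Y) = (Y, (pq c Y - X) / a)"
  unfolding henon_inv_def by simp

lemma PP_inv:
  assumes "a \<noteq> 0"
  shows "PP c (x,y,a) m = (a^ tau m * fst ((henon_inv c a ^^ m) (x,y)), a^ sgm m * snd ((henon_inv c a ^^ m) (x,y)))"
proof (induction m)
  case 0 then show ?case by (simp add: tau_def sgm_def)
next
  case (Suc m)
  obtain X Y where XY: "(henon_inv c a ^^ m) (x,y) = (X, Y)" by (cases "(henon_inv c a ^^ m) (x,y)")
  have e: "tau m + ee m = 2 * sgm m" using tau_le[of m] unfolding ee_def by simp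
  have p: "a^(2 * sgm m) = a ^ tau m * a ^ ee m" using e by (metis power_add)
  have "a ^ sgm (Suc m) * ((pq c Y - X) / a) = a^(2 * sgm m) * (Y^2 + c - X)"
    using assms unfolding sgm_Suc pq_def by (simp add: power_add power_mult)
  also have "\<dots> = (a ^ sgm m * Y)^2 + c * a^(2 * sgm m) - a ^ tau m * X * a^ ee m"
  proof -
    have q: "(a ^ sgm m * Y)^2 = a^(2 * sgm m) * Y^2"
      by (simp add: power_mult_distrib power_mult[symmetric] mult.commute)
    have r: "a ^ tau m * X * a ^ ee m = a^(2 * sgm m) * X" by (simp add: p)
    show ?thesis unfolding q r by (simp add: algebra_simps)
  qed
  finally show ?case using Suc XY by (simp add: tau_Suc henon_inv_simp)
qed

lemma PP_zero:
  assumes "m \<ge> 1"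
  shows "snd (PP c (x,y,0) m) = (pq c y - x)^(2^(m-1))"
  using assms
proof (induction m rule: dec_induct)
  case base then show ?case by (simp add: ee_def sgm_def tau_def pq_def)
next
  case (step m)
  have "2 * sgm m \<noteq> 0" "ee m \<noteq> 0" using sgm_pos[OF step(1)] ee_pos[OF step(1)] by auto
  then have "snd (PP c (x,y,0) (Suc m)) = (snd (PP c (x,y,0) m))^2" by (simp add: zero_power)
  also have "\<dots> = (pq c y - x)^(2^(m-1) * 2)" using step(3) by (simp add: power_mult)
  also have "(2::nat)^(m-1) * 2 = 2^(Suc m - 1)" using step(1) by (cases m) auto
  finally show ?case .
qed

lemma henon_henon_inv: "a \<noteq> 0 \<Longrightarrow> henon c a (henon_inv c a z) = z"
  unfolding henon_def henon_inv_def by (cases z) auto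

lemma henon_inv_henon: "a \<noteq> 0 \<Longrightarrow> henon_inv c a (henon c a z) = z"
  unfolding henon_def henon_inv_def by (cases z) auto

lemma funpow_inv:
  fixes f g :: "'a \<Rightarrow> 'a"
  assumes "\<And>z. g (f z) = z"
  shows "(g ^^ m) ((f ^^ m) z) = z"
proof (induction m arbitrary: z)
  case 0 then show ?case by simp
next
  case (Suc m)
  have e1: "(f ^^ Suc m) z = f ((f ^^ m) z)" by simp
  have e2: "(g ^^ Suc m) w = (g ^^ m) (g w)" for w by (simp add: funpow_Suc_right del: funpow.simps)
  have "(g ^^ Suc m) ((f ^^ Suc m) z) = (g ^^ m) (g (f ((f ^^ m) z)))"
    unfolding e1 e2 ..
  also have "\<dots> = z" using assms Suc by simp
  finally show ?case .
qed

lemma in_image_henon: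
  assumes "a \<noteq> 0"
  shows "(x,y) \<in> (henon c a ^^ m) ` V \<longleftrightarrow> (henon_inv c a ^^ m) (x,y) \<in> V"
proof
  assume "(x,y) \<in> (henon c a ^^ m) ` V"
  then obtain w where "w \<in> V" "(x,y) = (henon c a ^^ m) w" by blast
  then show "(henon_inv c a ^^ m) (x,y) \<in> V"
    using funpow_inv[of "henon_inv c a" "henon c a"] henon_inv_henon[OF assms] by simp
next
  assume "(henon_inv c a ^^ m) (x,y) \<in> V"
  moreover have "(henon c a ^^ m) ((henon_inv c a ^^ m) (x,y)) = (x,y)"
    using funpow_inv[of "henon c a" "henon_inv c a"] henon_henon_inv[OF assms] by simp
  ultimately show "(x,y) \<in> (henon c a ^^ m) ` V" by (metis image_eqI)
qed




definition Wf :: "complex \<Rightarrow> complex \<Rightarrow> complex \<Rightarrow> complex" where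
  "Wf c u r = 1 + c * u^2 - u * r"
definition Fm :: "complex \<Rightarrow> complex \<Rightarrow> complex \<times> complex \<Rightarrow> complex \<times> complex" where
  "Fm c a p = (a * fst p ^ 2 / Wf c (fst p) (snd p), a * fst p / Wf c (fst p) (snd p))"
definition itr :: "complex \<Rightarrow> complex \<times> complex \<times> complex \<Rightarrow> nat \<Rightarrow> complex \<times> complex" where
  "itr c q k = (Fm c (snd (snd q)) ^^ k) (fst q, fst (snd q))"
definition Ew :: "complex \<Rightarrow> complex \<times> complex \<Rightarrow> complex" where
  "Ew c p = c * fst p ^ 2 - fst p * snd p"

lemma itr_Suc: "itr c q (Suc k) = Fm c (snd (snd q)) (itr c q k)"
  unfolding itr_def by simp

lemma Wf_Ew: "Wf c u r = 1 + Ew c (u, r)"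
  unfolding Wf_def Ew_def by simp

lemma W_deriv:
  assumes U: "(U has_derivative LU) (at q)" and V: "(V has_derivative LV) (at q)"
  shows "((\<lambda>p. Wf c (U p) (V p)) has_derivative (\<lambda>h. (2 * c * U q - V q) * LU h - U q * LV h)) (at q)"
  unfolding Wf_def
  apply (rule has_derivative_eq_rhs)
   apply (rule derivative_eq_intros U V refl | simp)+
  apply (rule ext)
  apply (simp add: algebra_simps power2_eq_square)
  done

lemma F1_deriv:
  assumes U: "(U has_derivative LU) (at q)" and V: "(V has_derivative LV) (at q)"
    and W: "Wf c (U q) (V q) \<noteq> 0"
  shows "((\<lambda>p. snd (snd p) * U p ^ 2 / Wf c (U p) (V p)) has_derivative
    (\<lambda>h. (2 * snd (snd q) * U q / Wf c (U q) (V q) - snd (snd q) * U q ^ 2 * (2 * c * U q - V q) / (Wf c (U q) (V q))^2) * LU h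
        + (snd (snd q) * U q ^ 3 / (Wf c (U q) (V q))^2) * LV h + (U q ^ 2 / Wf c (U q) (V q)) * snd (snd h))) (at q)"
proof -
  have dN: "((\<lambda>p. snd (snd p) * U p ^ 2) has_derivative (\<lambda>h. snd (snd q) * (2 * U q * LU h) + snd (snd h) * U q ^ 2)) (at q)"
    apply (rule has_derivative_eq_rhs)
     apply (rule derivative_eq_intros U V refl | simp)+
    apply (rule ext)
    apply (simp add: algebra_simps power2_eq_square)
    done
  show ?thesis
    apply (rule has_derivative_eq_rhs)
     apply (rule has_derivative_divide[OF dN W_deriv[OF U V] W])
    apply (rule ext)
    using W apply (simp add: field_simps power2_eq_square power3_eq_cube)
    done
qed

lemma F2_deriv:
  assumes U: "(U has_derivative LU) (at q)" and V: "(V has_derivative LV) (at q)"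
    and W: "Wf c (U q) (V q) \<noteq> 0"
  shows "((\<lambda>p. snd (snd p) * U p / Wf c (U p) (V p)) has_derivative
    (\<lambda>h. (snd (snd q) / Wf c (U q) (V q) - snd (snd q) * U q * (2 * c * U q - V q) / (Wf c (U q) (V q))^2) * LU h
        + (snd (snd q) * U q ^ 2 / (Wf c (U q) (V q))^2) * LV h + (U q / Wf c (U q) (V q)) * snd (snd h))) (at q)"
proof -
  have dN: "((\<lambda>p. snd (snd p) * U p) has_derivative (\<lambda>h. snd (snd q) * LU h + snd (snd h) * U q)) (at q)"
    apply (rule has_derivative_eq_rhs)
     apply (rule derivative_eq_intros U V refl | simp)+
    done
  show ?thesis
    apply (rule has_derivative_eq_rhs)
     apply (rule has_derivative_divide[OF dN W_deriv[OF U V] W])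
    apply (rule ext)
    using W apply (simp add: field_simps power2_eq_square power3_eq_cube)
    done
qed

locale hs =
  fixes c :: complex and R \<rho> \<alpha> :: real
  assumes R: "R > 0" and rho0: "0 < \<rho>" and rho1: "\<rho> < 1" and alpha: "\<alpha> > 0"
   and A5: "\<And>y. cmod y \<ge> \<alpha> \<Longrightarrow> cmod c / (cmod y)^2 + (R+1) / cmod y < \<rho>"
   and A6: "\<And>y. cmod y \<ge> \<alpha> \<Longrightarrow> cmod (pq c y) > (2*R+1) * cmod y"
begin

lemma inv_step:
  assumes u: "cmod u \<le> 1/\<alpha>" and r: "cmod r \<le> 1" and a: "cmod a \<le> R"
  shows "cmod (Ew c (u,r)) < \<rho> \<and> cmod (fst (Fm c a (u,r))) \<le> cmod u / 2 \<and> cmod (snd (Fm c a (u,r))) \<le> 1/2"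
proof (cases "u = 0")
  case True
  then show ?thesis using rho0 by (simp add: Ew_def Fm_def)
next
  case False
  define Y where "Y = 1/u"
  have Y0: "Y \<noteq> 0" and uY: "u = 1/Y" using False unfolding Y_def by auto
  have Ya: "cmod Y \<ge> \<alpha>" using u alpha False unfolding Y_def
    by (simp add: norm_divide field_simps)
  have Ypos: "cmod Y > 0" using Y0 by simp
  have "cmod (Ew c (u,r)) \<le> cmod c * cmod u ^ 2 + cmod u * cmod r"
    unfolding Ew_def by (metis fst_conv snd_conv norm_mult norm_power norm_triangle_ineq4)
  also have "\<dots> \<le> cmod c / (cmod Y)^2 + 1 / cmod Y"
    using r Ypos by (simp add: uY norm_divide power_divide divide_le_cancel mult_left_le_one_le)
  also have "\<dots> \<le> cmod c / (cmod Y)^2 + (R + 1) / cmod Y"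
    using R Ypos by (simp add: divide_right_mono)
  also have "\<dots> < \<rho>" using A5[OF Ya] .
  finally have E: "cmod (Ew c (u,r)) < \<rho>" .
  have W: "Y^2 * Wf c u r = pq c Y - r * Y"
    using Y0 unfolding Wf_def pq_def uY by (simp add: field_simps power2_eq_square)
  have "cmod (pq c Y - r * Y) \<ge> cmod (pq c Y) - cmod (r * Y)" by (rule norm_triangle_ineq2)
  moreover have "cmod (r * Y) \<le> cmod Y" using r Ypos by (simp add: norm_mult mult_left_le_one_le)
  ultimately have big: "cmod (pq c Y - r * Y) > 2 * R * cmod Y" using A6[OF Ya] by (simp add: algebra_simps)
  have bigpos: "cmod (pq c Y - r * Y) > 0" proof -
    have "2 * R * cmod Y > 0" using R Ypos by simp
    then show ?thesis using big by linarith
  qed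
  have f1: "fst (Fm c a (u,r)) = a / (pq c Y - r * Y)"
    using Y0 W unfolding Fm_def uY by (simp add: field_simps power2_eq_square)
  have Wn: "Wf c u r \<noteq> 0" using W bigpos by auto
  have "snd (Fm c a (u,r)) = a * Y / (Y^2 * Wf c u r)"
    using Y0 Wn unfolding Fm_def by (simp add: uY field_simps power2_eq_square)
  then have f2: "snd (Fm c a (u,r)) = a * Y / (pq c Y - r * Y)" using W by simp
  have "cmod (a / (pq c Y - r * Y)) \<le> R / (2 * R * cmod Y)"
    unfolding norm_divide using a big bigpos R Ypos by (intro frac_le) auto
  also have "\<dots> = cmod u / 2" using R Ypos by (simp add: uY norm_divide)
  finally have 1: "cmod (fst (Fm c a (u,r))) \<le> cmod u / 2" using f1 by simp
  have "cmod (a * Y / (pq c Y - r * Y)) \<le> R * cmod Y / (2 * R * cmod Y)"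
    unfolding norm_divide norm_mult using a big bigpos R Ypos by (intro frac_le mult_right_mono) auto
  also have "\<dots> = 1/2" using R Ypos by simp
  finally have 2: "cmod (snd (Fm c a (u,r))) \<le> 1/2" using f2 by simp
  show ?thesis using E 1 2 by simp
qed

lemma itr_bound:
  assumes u: "cmod (fst q) \<le> 1/\<alpha>" and r: "cmod (fst (snd q)) \<le> 1" and a: "cmod (snd (snd q)) \<le> R"
  shows "cmod (fst (itr c q k)) \<le> (1/2)^k / \<alpha> \<and> cmod (snd (itr c q k)) \<le> 1 \<and> cmod (Ew c (itr c q k)) < \<rho>"
proof (induction k)
  case 0
  then show ?case using inv_step[OF u r a] u r by (simp add: itr_def)
next
  case (Suc k)
  obtain u' r' where ur: "itr c q k = (u', r')" by (cases "itr c q k")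
  have "(1/2::real)^k \<le> 1" by (rule power_le_one) auto
  then have pk: "(1/2::real)^k / \<alpha> \<le> 1/\<alpha>" using alpha by (intro divide_right_mono) auto
  have u': "cmod u' \<le> 1/\<alpha>" using Suc ur pk by simp
  have st: "cmod (fst (Fm c (snd (snd q)) (u',r'))) \<le> cmod u' / 2" "cmod (snd (Fm c (snd (snd q)) (u',r'))) \<le> 1/2"
    using inv_step[OF u' _ a, of r'] Suc ur by auto
  obtain u'' r'' where ur2: "itr c q (Suc k) = (u'', r'')" by (cases "itr c q (Suc k)")
  have e: "Fm c (snd (snd q)) (u',r') = (u'', r'')" using ur ur2 itr_Suc by metis
  have u'': "cmod u'' \<le> (1/2)^Suc k / \<alpha>" using st(1) Suc ur e by simp
  have "(1/2::real)^Suc k \<le> 1" by (rule power_le_one) auto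
  then have pk2: "(1/2::real)^Suc k / \<alpha> \<le> 1/\<alpha>" using alpha by (intro divide_right_mono) auto
  have u''1: "cmod u'' \<le> 1/\<alpha>" using u'' pk2 by linarith
  have r'': "cmod r'' \<le> 1" using st(2) e by simp
  show ?case using u'' r'' inv_step[OF u''1 r'' a] ur2 by simp
qed

end


lemma nb_mult: "cmod x \<le> X \<Longrightarrow> cmod y \<le> Y \<Longrightarrow> cmod (x * y) \<le> X * Y"
  by (simp add: norm_mult mult_mono')

lemma nb_div: "cmod x \<le> X \<Longrightarrow> d \<le> cmod w \<Longrightarrow> 0 < d \<Longrightarrow> cmod (x / w) \<le> X / d"
  unfolding norm_divide by (rule frac_le) (auto intro: order_trans[OF norm_ge_zero])

lemma nb_div2: "cmod x \<le> X \<Longrightarrow> d \<le> cmod w \<Longrightarrow> 0 < d \<Longrightarrow> cmod (x / w^2) \<le> X / d^2"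
  unfolding norm_divide norm_power by (rule frac_le) (auto intro: order_trans[OF norm_ge_zero] power_mono)

context hs begin

definition "dl = 1 - \<rho>"
definition "Cw = 2 * cmod c / \<alpha> + 1"
definition "Kc = R / dl + R * Cw / (\<alpha> * dl^2)"
definition "Cc = 2*R/dl + R*Cw/(\<alpha>*dl^2) + R/(\<alpha>^2*dl^2) + 1/(\<alpha>*dl) + R/(\<alpha>*dl^2) + 1/dl"

lemma dl_pos: "dl > 0" using rho1 unfolding dl_def by simp
lemma Cw_ge: "Cw \<ge> 1" using alpha unfolding Cw_def by simp
lemma Kc_pos: "Kc > 0" using R alpha dl_pos Cw_ge unfolding Kc_def by (simp add: add_pos_nonneg)
lemma Cc_nn: "Cc \<ge> 0" using R alpha dl_pos Cw_ge unfolding Cc_def by simp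

lemma partial_bounds:
  assumes u: "cmod u \<le> \<mu>" and mu0: "0 \<le> \<mu>" and mu1: "\<mu> \<le> 1/\<alpha>" and r: "cmod r \<le> 1"
    and a: "cmod a \<le> R" and E: "cmod (Ew c (u,r)) < \<rho>"
  defines "W \<equiv> Wf c u r"
  shows "dl \<le> cmod W" "cmod (2 * c * u - r) \<le> Cw"
    "cmod (2 * a * u / W - a * u^2 * (2 * c * u - r) / W^2) \<le> Cc * \<mu>"
    "cmod (a * u^3 / W^2) \<le> Cc * \<mu>"
    "cmod (u^2 / W) \<le> Cc * \<mu>"
    "cmod (a / W - a * u * (2 * c * u - r) / W^2) \<le> Kc"
    "cmod (a * u^2 / W^2) \<le> Cc * \<mu>"
    "cmod (u / W) \<le> Cc * \<mu>"
proof -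
  have ia: "1/\<alpha> > 0" using alpha by simp
  have u1: "cmod u \<le> 1/\<alpha>" using u mu1 by linarith
  have "cmod W \<ge> 1 - cmod (Ew c (u,r))" unfolding W_def Wf_Ew
    by (metis norm_diff_ineq norm_one)
  then show Wd: "dl \<le> cmod W" using E unfolding dl_def by linarith
  have dl: "dl > 0" by (rule dl_pos)
  have "cmod (2 * c * u - r) \<le> cmod (2 * c * u) + cmod r" by (rule norm_triangle_ineq4)
  also have "cmod (2 * c * u) \<le> 2 * cmod c * (1/\<alpha>)"
    using mult_left_mono[OF u1, of "2 * cmod c"] by (simp add: norm_mult)
  finally show Wu: "cmod (2 * c * u - r) \<le> Cw" using r unfolding Cw_def by simp
  have u2: "cmod (u^2) \<le> \<mu> * (1/\<alpha>)" using nb_mult[OF u u1] by (simp add: power2_eq_square)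
  have u3: "cmod (u^3) \<le> \<mu> * (1/\<alpha>)^2" using nb_mult[OF nb_mult[OF u u1] u1]
    by (simp add: power3_eq_cube power2_eq_square mult.assoc)
  have au: "cmod (2 * a * u) \<le> 2 * R * \<mu>"
    using nb_mult[OF nb_mult[of 2 2 a R] u] a by simp
  have t1: "cmod (2 * a * u / W) \<le> 2 * R * \<mu> / dl" by (rule nb_div[OF au Wd dl])
  have t2: "cmod (a * u^2 * (2 * c * u - r) / W^2) \<le> R * (\<mu> * (1/\<alpha>)) * Cw / dl^2"
    by (rule nb_div2[OF nb_mult[OF nb_mult[OF a u2] Wu] Wd dl])
  have "cmod (2 * a * u / W - a * u^2 * (2 * c * u - r) / W^2) \<le> 2 * R * \<mu> / dl + R * (\<mu> * (1/\<alpha>)) * Cw / dl^2"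
    using norm_triangle_ineq4[of "2 * a * u / W" "a * u^2 * (2 * c * u - r) / W^2"] t1 t2 by linarith
  also have "\<dots> = \<mu> * (2*R/dl + R*Cw/(\<alpha>*dl^2))" by (simp add: field_simps)
  also have "\<dots> \<le> \<mu> * Cc" using mu0 R alpha dl Cw_ge unfolding Cc_def
    by (intro mult_left_mono) (auto simp: add_nonneg_nonneg)
  finally show "cmod (2 * a * u / W - a * u^2 * (2 * c * u - r) / W^2) \<le> Cc * \<mu>" by (simp add: mult.commute)
  have "cmod (a * u^3 / W^2) \<le> R * (\<mu> * (1/\<alpha>)^2) / dl^2"
    by (rule nb_div2[OF nb_mult[OF a u3] Wd dl])
  also have "\<dots> = \<mu> * (R/(\<alpha>^2*dl^2))" by (simp add: field_simps power2_eq_square)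
  also have "\<dots> \<le> \<mu> * Cc" using mu0 R alpha dl Cw_ge unfolding Cc_def
    by (intro mult_left_mono) (auto simp: add_nonneg_nonneg)
  finally show "cmod (a * u^3 / W^2) \<le> Cc * \<mu>" by (simp add: mult.commute)
  have "cmod (u^2 / W) \<le> (\<mu> * (1/\<alpha>)) / dl" by (rule nb_div[OF u2 Wd dl])
  also have "\<dots> = \<mu> * (1/(\<alpha>*dl))" by (simp add: field_simps)
  also have "\<dots> \<le> \<mu> * Cc" using mu0 R alpha dl Cw_ge unfolding Cc_def
    by (intro mult_left_mono) (auto simp: add_nonneg_nonneg)
  finally show "cmod (u^2 / W) \<le> Cc * \<mu>" by (simp add: mult.commute)
  have "cmod (a / W) \<le> R / dl" by (rule nb_div[OF a Wd dl])
  moreover have "cmod (a * u * (2 * c * u - r) / W^2) \<le> R * (1/\<alpha>) * Cw / dl^2"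
    by (rule nb_div2[OF nb_mult[OF nb_mult[OF a u1] Wu] Wd dl])
  ultimately have "cmod (a / W - a * u * (2 * c * u - r) / W^2) \<le> R / dl + R * (1/\<alpha>) * Cw / dl^2"
    using norm_triangle_ineq4[of "a / W" "a * u * (2 * c * u - r) / W^2"] by linarith
  then show "cmod (a / W - a * u * (2 * c * u - r) / W^2) \<le> Kc" unfolding Kc_def by (simp add: field_simps)
  have "cmod (a * u^2 / W^2) \<le> R * (\<mu> * (1/\<alpha>)) / dl^2"
    by (rule nb_div2[OF nb_mult[OF a u2] Wd dl])
  also have "\<dots> = \<mu> * (R/(\<alpha>*dl^2))" by (simp add: field_simps)
  also have "\<dots> \<le> \<mu> * Cc" using mu0 R alpha dl Cw_ge unfolding Cc_def
    by (intro mult_left_mono) (auto simp: add_nonneg_nonneg)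
  finally show "cmod (a * u^2 / W^2) \<le> Cc * \<mu>" by (simp add: mult.commute)
  have "cmod (u / W) \<le> \<mu> / dl" by (rule nb_div[OF u Wd dl])
  also have "\<dots> = \<mu> * (1/dl)" by (simp add: field_simps)
  also have "\<dots> \<le> \<mu> * Cc" using mu0 R alpha dl Cw_ge unfolding Cc_def
    by (intro mult_left_mono) (auto simp: add_nonneg_nonneg)
  finally show "cmod (u / W) \<le> Cc * \<mu>" by (simp add: mult.commute)
qed

end


lemma comb:
  fixes A B H t K x y :: real
  assumes "0\<le>A" "0\<le>B" "0\<le>H" "0\<le>t" "0\<le>K" "x \<le> t*A + t*B + t*H" "y \<le> K*A + t*B + t*H"
  shows "K*x + y + H \<le> (1 + t*(K+1))*(K*A + B + H)"
proof -
  have 1: "K*x \<le> K*(t*A+t*B+t*H)" using assms by (intro mult_left_mono) auto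
  have 2: "(1 + t*(K+1))*(K*A + B + H) = K*(t*A+t*B+t*H) + K*A + t*B + t*H + H + t*K*K*A + B"
    by (simp add: algebra_simps)
  have 3: "0 \<le> t*K*K*A" using assms by simp
  show ?thesis using 1 2 3 assms by linarith
qed

lemma norm_h1: "cmod (fst h) \<le> norm (h :: complex \<times> complex \<times> complex)"
  using norm_fst_le[of "fst h" "snd h"] by simp
lemma norm_h23: "norm (snd h) \<le> norm (h :: complex \<times> complex \<times> complex)"
  using norm_snd_le[of "snd h" "fst h"] by simp
lemma norm_h2: "cmod (fst (snd h)) \<le> norm (h :: complex \<times> complex \<times> complex)"
  using norm_fst_le[of "fst (snd h)" "snd (snd h)"] norm_h23[of h] by simp
lemma norm_h3: "cmod (snd (snd h)) \<le> norm (h :: complex \<times> complex \<times> complex)"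
  using norm_snd_le[of "snd (snd h)" "fst (snd h)"] norm_h23[of h] by simp

lemma cscale3_simps: "fst (cscale3 w v) = w * fst v" "fst (snd (cscale3 w v)) = w * fst (snd v)"
  "snd (snd (cscale3 w v)) = w * snd (snd v)"
  unfolding cscale3_def by (auto split: prod.splits)

lemma norm3: "norm (a + b + c) \<le> norm a + norm b + norm (c::'a::real_normed_vector)"
  using norm_triangle_ineq[of "a+b" c] norm_triangle_ineq[of a b] by linarith

context hs begin

lemma itr_deriv:
  assumes q: "cmod (fst q) < 1/\<alpha>" "cmod (fst (snd q)) < 1" "cmod (snd (snd q)) < R"
  shows "\<exists>LU LV. ((\<lambda>p. fst (itr c p k)) has_derivative LU) (at q) \<and> ((\<lambda>p. snd (itr c p k)) has_derivative LV) (at q)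
     \<and> clin LU \<and> clin LV \<and> (\<forall>h. Kc * cmod (LU h) + cmod (LV h) + norm h \<le> (Kc+2) * (\<Prod>j<k. 1 + Cc*(Kc+1)*((1/2)^j/\<alpha>)) * norm h)"
proof (induction k)
  case 0
  have d1: "((\<lambda>p. fst (itr c p 0)) has_derivative (\<lambda>h. fst h)) (at q)"
    by (simp add: itr_def) (rule derivative_eq_intros refl)+
  have d2: "((\<lambda>p. snd (itr c p 0)) has_derivative (\<lambda>h. fst (snd h))) (at q)"
    by (simp add: itr_def) (rule derivative_eq_intros refl)+
  have b: "Kc * cmod (fst h) + cmod (fst (snd h)) + norm h \<le> (Kc+2) * norm h" for h :: "complex \<times> complex \<times> complex"
  proof -
    have "Kc * cmod (fst h) \<le> Kc * norm h" using norm_h1[of h] Kc_pos by (intro mult_left_mono) auto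
    then show ?thesis using norm_h2[of h] by (simp add: algebra_simps)
  qed
  show ?case using d1 d2 b by (intro exI[of _ "\<lambda>h. fst h"] exI[of _ "\<lambda>h. fst (snd h)"]) (auto simp: clin_def cscale3_simps)
next
  case (Suc k)
  obtain LU LV where IH: "((\<lambda>p. fst (itr c p k)) has_derivative LU) (at q)" "((\<lambda>p. snd (itr c p k)) has_derivative LV) (at q)"
     "clin LU" "clin LV" "\<And>h. Kc * cmod (LU h) + cmod (LV h) + norm h \<le> (Kc+2) * (\<Prod>j<k. 1 + Cc*(Kc+1)*((1/2)^j/\<alpha>)) * norm h"
    using Suc by blast
  define U where "U p = fst (itr c p k)" for p
  define V where "V p = snd (itr c p k)" for p
  define \<mu> where "\<mu> = (1/2::real)^k / \<alpha>"
  define u where "u = U q"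
  define r where "r = V q"
  define a where "a = snd (snd q)"
  define W where "W = Wf c u r"
  have dU: "(U has_derivative LU) (at q)" using IH(1) unfolding U_def .
  have dV: "(V has_derivative LV) (at q)" using IH(2) unfolding V_def .
  have ib: "cmod u \<le> \<mu>" "cmod r \<le> 1" "cmod (Ew c (u, r)) < \<rho>"
    using itr_bound[of q k] q unfolding u_def r_def U_def V_def \<mu>_def by auto
  have mu0: "0 \<le> \<mu>" using alpha unfolding \<mu>_def by simp
  have mu1: "\<mu> \<le> 1/\<alpha>" using alpha unfolding \<mu>_def by (simp add: divide_right_mono power_le_one)
  have a: "cmod a \<le> R" using q unfolding a_def by simp
  note pb = partial_bounds[OF ib(1) mu0 mu1 ib(2) a ib(3), folded W_def]
  have Wn: "W \<noteq> 0" using pb(1) dl_pos by auto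
  have e1: "(\<lambda>p. fst (itr c p (Suc k))) = (\<lambda>p. snd (snd p) * U p ^ 2 / Wf c (U p) (V p))"
    by (rule ext) (simp add: itr_Suc Fm_def U_def V_def)
  have e2: "(\<lambda>p. snd (itr c p (Suc k))) = (\<lambda>p. snd (snd p) * U p / Wf c (U p) (V p))"
    by (rule ext) (simp add: itr_Suc Fm_def U_def V_def)
  define f1u where "f1u = 2 * a * u / W - a * u^2 * (2 * c * u - r) / W^2"
  define f1r where "f1r = a * u^3 / W^2"
  define f1a where "f1a = u^2 / W"
  define f2u where "f2u = a / W - a * u * (2 * c * u - r) / W^2"
  define f2r where "f2r = a * u^2 / W^2"
  define f2a where "f2a = u / W"
  have D1: "((\<lambda>p. fst (itr c p (Suc k))) has_derivative (\<lambda>h. f1u * LU h + f1r * LV h + f1a * snd (snd h))) (at q)"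
    unfolding e1 f1u_def f1r_def f1a_def W_def u_def r_def a_def using F1_deriv[OF dU dV] Wn
    unfolding W_def u_def r_def by blast
  have D2: "((\<lambda>p. snd (itr c p (Suc k))) has_derivative (\<lambda>h. f2u * LU h + f2r * LV h + f2a * snd (snd h))) (at q)"
    unfolding e2 f2u_def f2r_def f2a_def W_def u_def r_def a_def using F2_deriv[OF dU dV] Wn
    unfolding W_def u_def r_def by blast
  have C1: "clin (\<lambda>h. f1u * LU h + f1r * LV h + f1a * snd (snd h))"
    using IH(3,4) unfolding clin_def by (simp add: cscale3_simps algebra_simps)
  have C2: "clin (\<lambda>h. f2u * LU h + f2r * LV h + f2a * snd (snd h))"
    using IH(3,4) unfolding clin_def by (simp add: cscale3_simps algebra_simps)
  have bf: "cmod f1u \<le> Cc * \<mu>" "cmod f1r \<le> Cc * \<mu>" "cmod f1a \<le> Cc * \<mu>" "cmod f2u \<le> Kc"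
     "cmod f2r \<le> Cc * \<mu>" "cmod f2a \<le> Cc * \<mu>"
    using pb unfolding f1u_def f1r_def f1a_def f2u_def f2r_def f2a_def by auto
  define P where "P = (\<Prod>j<k. 1 + Cc*(Kc+1)*((1/2::real)^j/\<alpha>))"
  have B: "Kc * cmod (f1u * LU h + f1r * LV h + f1a * snd (snd h)) + cmod (f2u * LU h + f2r * LV h + f2a * snd (snd h)) + norm h
        \<le> (Kc+2) * (\<Prod>j<Suc k. 1 + Cc*(Kc+1)*((1/2)^j/\<alpha>)) * norm h" for h
  proof -
    define t where "t = Cc * \<mu>"
    have t0: "0 \<le> t" unfolding t_def using Cc_nn mu0 by simp
    have x: "cmod (f1u * LU h + f1r * LV h + f1a * snd (snd h)) \<le> t * cmod (LU h) + t * cmod (LV h) + t * norm h"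
    proof -
      have "cmod (f1u * LU h + f1r * LV h + f1a * snd (snd h)) \<le> cmod (f1u * LU h) + cmod (f1r * LV h) + cmod (f1a * snd (snd h))"
        by (rule norm3)
      moreover have "cmod (f1u * LU h) \<le> t * cmod (LU h)" using bf(1) unfolding t_def norm_mult by (simp add: mult_right_mono)
      moreover have "cmod (f1r * LV h) \<le> t * cmod (LV h)" using bf(2) unfolding t_def norm_mult by (simp add: mult_right_mono)
      moreover have "cmod (f1a * snd (snd h)) \<le> t * norm h" using bf(3) norm_h3[of h] t0 unfolding t_def norm_mult
        by (meson mult_mono norm_ge_zero)
      ultimately show ?thesis by linarith
    qed
    have y: "cmod (f2u * LU h + f2r * LV h + f2a * snd (snd h)) \<le> Kc * cmod (LU h) + t * cmod (LV h) + t * norm h"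
    proof -
      have "cmod (f2u * LU h + f2r * LV h + f2a * snd (snd h)) \<le> cmod (f2u * LU h) + cmod (f2r * LV h) + cmod (f2a * snd (snd h))"
        by (rule norm3)
      moreover have "cmod (f2u * LU h) \<le> Kc * cmod (LU h)" using bf(4) unfolding norm_mult by (simp add: mult_right_mono)
      moreover have "cmod (f2r * LV h) \<le> t * cmod (LV h)" using bf(5) unfolding t_def norm_mult by (simp add: mult_right_mono)
      moreover have "cmod (f2a * snd (snd h)) \<le> t * norm h" using bf(6) norm_h3[of h] t0 unfolding t_def norm_mult
        by (meson mult_mono norm_ge_zero)
      ultimately show ?thesis by linarith
    qed
    have "Kc * cmod (f1u * LU h + f1r * LV h + f1a * snd (snd h)) + cmod (f2u * LU h + f2r * LV h + f2a * snd (snd h)) + norm h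
       \<le> (1 + t*(Kc+1)) * (Kc * cmod (LU h) + cmod (LV h) + norm h)"
      by (rule comb[OF _ _ _ t0 _ x y]) (use Kc_pos in auto)
    also have "\<dots> \<le> (1 + t*(Kc+1)) * ((Kc+2) * P * norm h)"
      using IH(5)[of h] t0 Kc_pos unfolding P_def by (intro mult_left_mono) auto
    also have "\<dots> = (Kc+2) * (P * (1 + Cc*(Kc+1)*((1/2)^k/\<alpha>))) * norm h"
      unfolding t_def \<mu>_def using alpha by (simp add: field_simps)
    finally show ?thesis unfolding P_def by simp
  qed
  show ?case using D1 D2 C1 C2 B by blast
qed

end


context hs begin

definition "C2 = Cc * (Kc + 1)"
definition "Mb = (Kc + 2) * exp (2 * C2 / \<alpha>)"
definition "Cg = (Cw / Kc + 1/\<alpha>) * Mb / dl"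

lemma C2_nn: "C2 \<ge> 0" unfolding C2_def using Cc_nn Kc_pos by simp

lemma prod_bound: "(\<Prod>j<k. 1 + C2 * ((1/2::real)^j / \<alpha>)) \<le> exp (2 * C2 / \<alpha>)"
proof -
  have t: "0 \<le> 1 + C2 * ((1/2::real)^j / \<alpha>) \<and> 1 + C2 * ((1/2::real)^j / \<alpha>) \<le> exp (C2 * ((1/2::real)^j / \<alpha>))" for j
  proof
    have "0 \<le> C2 * ((1/2::real)^j / \<alpha>)" using C2_nn alpha by simp
    then show "0 \<le> 1 + C2 * ((1/2::real)^j / \<alpha>)" by linarith
    show "1 + C2 * ((1/2::real)^j / \<alpha>) \<le> exp (C2 * ((1/2::real)^j / \<alpha>))" by (rule exp_ge_add_one_self)
  qed
  have "(\<Prod>j<k. 1 + C2 * ((1/2::real)^j / \<alpha>)) \<le> (\<Prod>j<k. exp (C2 * ((1/2::real)^j / \<alpha>)))"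
    by (rule prod_mono) (rule t)
  also have "\<dots> = exp (\<Sum>j<k. C2 * ((1/2::real)^j / \<alpha>))" by (rule exp_sum[symmetric]) simp
  also have "(\<Sum>j<k. C2 * ((1/2::real)^j / \<alpha>)) = C2 / \<alpha> * (\<Sum>j<k. (1/2::real)^j)"
    by (simp add: sum_distrib_left)
  also have "(\<Sum>j<k. (1/2::real)^j) = 2 * (1 - (1/2)^k)"
    by (induction k) (simp_all add: algebra_simps)
  also have "C2 / \<alpha> * (2 * (1 - (1/2::real)^k)) \<le> 2 * C2 / \<alpha>"
  proof -
    have "C2 / \<alpha> \<ge> 0" using C2_nn alpha by simp
    moreover have "2 * (1 - (1/2::real)^k) \<le> 2" by simp
    ultimately have "C2 / \<alpha> * (2 * (1 - (1/2::real)^k)) \<le> C2 / \<alpha> * 2"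
      using mult_left_mono[of "2 * (1 - (1/2::real)^k)" 2 "C2 / \<alpha>"] by blast
    then show ?thesis by simp
  qed
  finally show ?thesis by simp
qed

lemma Cg_nn: "Cg \<ge> 0" unfolding Cg_def Mb_def using Kc_pos Cw_ge alpha dl_pos by simp

lemma term_deriv:
  assumes q: "cmod (fst q) < 1/\<alpha>" "cmod (fst (snd q)) < 1" "cmod (snd (snd q)) < R"
  shows "\<exists>L. ((\<lambda>p. (1/2)^Suc k * Ln (1 + Ew c (itr c p k))) has_derivative L) (at q) \<and> clin L
     \<and> (\<forall>h. cmod (L h) \<le> (1/2)^Suc k * Cg * norm h)"
proof -
  obtain LU LV where IH: "((\<lambda>p. fst (itr c p k)) has_derivative LU) (at q)" "((\<lambda>p. snd (itr c p k)) has_derivative LV) (at q)"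
     "clin LU" "clin LV" "\<And>h. Kc * cmod (LU h) + cmod (LV h) + norm h \<le> (Kc+2) * (\<Prod>j<k. 1 + Cc*(Kc+1)*((1/2)^j/\<alpha>)) * norm h"
    using itr_deriv[OF q, of k] by blast
  define U where "U p = fst (itr c p k)" for p
  define V where "V p = snd (itr c p k)" for p
  define \<mu> where "\<mu> = (1/2::real)^k / \<alpha>"
  define u where "u = U q"
  define r where "r = V q"
  define w where "w = Wf c u r"
  have dU: "(U has_derivative LU) (at q)" using IH(1) unfolding U_def .
  have dV: "(V has_derivative LV) (at q)" using IH(2) unfolding V_def .
  have ib: "cmod u \<le> \<mu>" "cmod r \<le> 1" "cmod (Ew c (u, r)) < \<rho>"
    using itr_bound[of q k] q unfolding u_def r_def U_def V_def \<mu>_def by auto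
  have mu0: "0 \<le> \<mu>" using alpha unfolding \<mu>_def by simp
  have "(1/2::real)^k \<le> 1" by (rule power_le_one) auto
  then have mu1: "\<mu> \<le> 1/\<alpha>" using alpha unfolding \<mu>_def by (intro divide_right_mono) auto
  have a: "cmod (snd (snd q)) \<le> R" using q by simp
  note pb = partial_bounds[OF ib(1) mu0 mu1 ib(2) a ib(3), folded w_def]
  have Rew: "Re w > 0"
  proof -
    have "Re (Ew c (u,r)) \<ge> - cmod (Ew c (u,r))" using abs_Re_le_cmod[of "Ew c (u,r)"] by linarith
    then show ?thesis using ib(3) rho1 unfolding w_def Wf_Ew by simp
  qed
  then have wn: "w \<notin> \<real>\<^sub>\<le>\<^sub>0" by (auto simp: complex_nonpos_Reals_iff)
  have e: "(\<lambda>p. (1/2)^Suc k * Ln (1 + Ew c (itr c p k))) = (\<lambda>p. (1/2)^Suc k * Ln (Wf c (U p) (V p)))"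
    by (rule ext) (simp add: Wf_Ew U_def V_def)
  have dW: "((\<lambda>p. Wf c (U p) (V p)) has_derivative (\<lambda>h. (2 * c * u - r) * LU h - u * LV h)) (at q)"
    using W_deriv[OF dU dV] unfolding u_def r_def .
  have dL: "((\<lambda>p. Ln (Wf c (U p) (V p))) has_derivative (\<lambda>h. inverse w * ((2 * c * u - r) * LU h - u * LV h))) (at q)"
  proof -
    have wq: "Wf c (U q) (V q) = w" by (simp add: w_def u_def r_def)
    have dLn: "(Ln has_derivative (*) (inverse w)) (at (Wf c (U q) (V q)))"
      using has_field_derivative_Ln[OF wn] unfolding has_field_derivative_def wq .
    show ?thesis using diff_chain_at[OF dW dLn] by (simp add: o_def)
  qed
  define L where "L h = (1/2)^Suc k * (inverse w * ((2 * c * u - r) * LU h - u * LV h))" for h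
  have D: "((\<lambda>p. (1/2)^Suc k * Ln (1 + Ew c (itr c p k))) has_derivative L) (at q)"
    unfolding e L_def by (rule has_derivative_mult_right[OF dL])
  have C: "clin L" using IH(3,4) unfolding clin_def L_def by (simp add: algebra_simps)
  have B: "cmod (L h) \<le> (1/2)^Suc k * Cg * norm h" for h
  proof -
    have P: "Kc * cmod (LU h) + cmod (LV h) \<le> Mb * norm h"
    proof -
      have "(\<Prod>j<k. 1 + Cc*(Kc+1)*((1/2::real)^j/\<alpha>)) \<le> exp (2 * C2 / \<alpha>)"
        using prod_bound unfolding C2_def by (simp add: mult.assoc)
      then have "(Kc+2) * (\<Prod>j<k. 1 + Cc*(Kc+1)*((1/2::real)^j/\<alpha>)) * norm h \<le> Mb * norm h"
        unfolding Mb_def using Kc_pos by (intro mult_right_mono mult_left_mono) auto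
      then show ?thesis using IH(5)[of h] norm_ge_zero[of h] by linarith
    qed
    have iw: "cmod (inverse w) \<le> 1 / dl"
      using le_imp_inverse_le[OF pb(1) dl_pos] by (simp add: norm_inverse divide_inverse)
    have "cmod ((2 * c * u - r) * LU h - u * LV h) \<le> Cw * cmod (LU h) + (1/\<alpha>) * cmod (LV h)"
    proof -
      have "cmod ((2 * c * u - r) * LU h - u * LV h) \<le> cmod ((2 * c * u - r) * LU h) + cmod (u * LV h)"
        by (rule norm_triangle_ineq4)
      moreover have "cmod ((2 * c * u - r) * LU h) \<le> Cw * cmod (LU h)"
        using pb(2) by (simp add: norm_mult mult_right_mono)
      moreover have "cmod (u * LV h) \<le> (1/\<alpha>) * cmod (LV h)"
      proof -
        have "cmod u \<le> 1/\<alpha>" using ib(1) mu1 by linarith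
        then show ?thesis using mult_right_mono[of "cmod u" "1/\<alpha>" "cmod (LV h)"] by (simp add: norm_mult)
      qed
      ultimately show ?thesis by linarith
    qed
    also have "\<dots> = (Cw / Kc) * (Kc * cmod (LU h)) + (1/\<alpha>) * cmod (LV h)" using Kc_pos by simp
    also have "\<dots> \<le> (Cw / Kc + 1/\<alpha>) * (Kc * cmod (LU h) + cmod (LV h))"
    proof -
      have "(Cw / Kc) * cmod (LV h) \<ge> 0" "(1/\<alpha>) * (Kc * cmod (LU h)) \<ge> 0" using Kc_pos Cw_ge alpha by auto
      then show ?thesis by (simp add: algebra_simps)
    qed
    also have "\<dots> \<le> (Cw / Kc + 1/\<alpha>) * (Mb * norm h)"
      using P Kc_pos Cw_ge alpha by (intro mult_left_mono) auto
    finally have N: "cmod ((2 * c * u - r) * LU h - u * LV h) \<le> (Cw / Kc + 1/\<alpha>) * (Mb * norm h)" .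
    have "cmod (L h) = (1/2)^Suc k * (cmod (inverse w) * cmod ((2 * c * u - r) * LU h - u * LV h))"
      unfolding L_def by (simp add: norm_mult norm_power)
    also have "\<dots> \<le> (1/2)^Suc k * ((1/dl) * ((Cw / Kc + 1/\<alpha>) * (Mb * norm h)))"
      using iw N dl_pos by (intro mult_left_mono mult_mono) auto
    also have "\<dots> = (1/2)^Suc k * Cg * norm h" unfolding Cg_def by (simp add: field_simps)
    finally show ?thesis .
  qed
  show ?thesis using D C B by blast
qed

end


definition Hs :: "complex \<Rightarrow> complex \<times> complex \<times> complex \<Rightarrow> complex" where
  "Hs c q = (\<Sum>k. (1/2)^Suc k * Ln (1 + Ew c (itr c q k)))"

lemma itr_zero_a: "itr c (0, 0, a) k = (0, 0)"
  by (induction k) (auto simp: itr_def Fm_def)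

context hs begin

definition "Om = ball (0::complex) (1/\<alpha>) \<times> ball (0::complex) 1 \<times> ball (0::complex) R"

lemma Om_iff: "q \<in> Om \<longleftrightarrow> cmod (fst q) < 1/\<alpha> \<and> cmod (fst (snd q)) < 1 \<and> cmod (snd (snd q)) < R"
  unfolding Om_def by (cases q) auto

lemma Om_open: "open Om" unfolding Om_def by (intro open_Times open_ball)
lemma Om_convex: "convex Om" unfolding Om_def by (intro convex_Times convex_ball)

lemma Hs_hol: "holomorphic3_on (Hs c) Om"
proof -
  define f where "f k p = (1/2)^Suc k * Ln (1 + Ew c (itr c p k))" for k p
  define f' where "f' k q = (SOME L. (f k has_derivative L) (at q) \<and> clin L \<and> (\<forall>h. cmod (L h) \<le> (1/2)^Suc k * Cg * norm h))" for k q
  have f'P: "(f k has_derivative f' k q) (at q) \<and> clin (f' k q) \<and> (\<forall>h. cmod (f' k q h) \<le> (1/2)^Suc k * Cg * norm h)"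
    if "q \<in> Om" for k q
  proof -
    have "\<exists>L. (f k has_derivative L) (at q) \<and> clin L \<and> (\<forall>h. cmod (L h) \<le> (1/2)^Suc k * Cg * norm h)"
      using term_deriv[of q k] that unfolding Om_iff f_def by blast
    then show ?thesis unfolding f'_def by (rule someI_ex)
  qed
  define g' where "g' q h = (\<Sum>k. f' k q h)" for q h
  have gsum: "summable (\<lambda>k. (1/2::real)^Suc k * Cg * norm h)" for h :: "complex \<times> complex \<times> complex"
    using summable_mult2[OF sums_summable[OF power_half_series], of "Cg * norm h"] by (simp add: mult.assoc)
  have fsum: "summable (\<lambda>k. f' k q h)" if "q \<in> Om" for q h
  proof (rule summable_comparison_test'[OF gsum[of h], where N=0])
    fix k :: nat
    show "norm (f' k q h) \<le> (1/2)^Suc k * Cg * norm h" using f'P[OF that, of k] by blast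
  qed
  have unif: "\<forall>\<^sub>F n in sequentially. \<forall>q\<in>Om. \<forall>h. norm (sum (\<lambda>i. f' i q h) {..<n} - g' q h) \<le> e * norm h"
    if e: "e > 0" for e
  proof -
    obtain N where N: "(1/2::real)^N < e / (Cg + 1)"
      using real_arch_pow_inv[of "e / (Cg + 1)" "1/2"] e Cg_nn by auto
    show ?thesis unfolding eventually_sequentially
    proof (intro exI[of _ N] allI impI ballI)
      fix n q h assume n: "N \<le> n" and q: "q \<in> Om"
      have "sum (\<lambda>i. f' i q h) {..<n} - g' q h = - (\<Sum>i. f' (i + n) q h)"
        unfolding g'_def using suminf_minus_initial_segment[OF fsum[OF q, of h], of n] by simp
      then have "norm (sum (\<lambda>i. f' i q h) {..<n} - g' q h) = norm (\<Sum>i. f' (i + n) q h)" by simp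
      also have "\<dots> \<le> (\<Sum>i. (1/2::real)^Suc (i + n) * Cg * norm h)"
      proof (rule norm_suminf_le)
        fix i
        show "norm (f' (i + n) q h) \<le> (1/2::real)^Suc (i + n) * Cg * norm h" using f'P[OF q, of "i+n"] by blast
        show "summable (\<lambda>i. (1/2::real)^Suc (i + n) * Cg * norm h)"
          using summable_ignore_initial_segment[OF gsum[of h], of n] by simp
      qed
      also have "(\<Sum>i. (1/2::real)^Suc (i + n) * Cg * norm h) = (1/2)^n * Cg * norm h"
      proof -
        have "(\<lambda>i. (1/2::real)^Suc (i + n) * Cg * norm h) = (\<lambda>i. ((1/2)^n * Cg * norm h) * (1/2)^Suc i)"
          by (rule ext) (simp add: power_add algebra_simps)
        moreover have "(\<lambda>i. ((1/2::real)^n * Cg * norm h) * (1/2)^Suc i) sums ((1/2)^n * Cg * norm h * 1)"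
          by (rule sums_mult[OF power_half_series])
        ultimately show ?thesis by (simp add: sums_iff)
      qed
      also have "\<dots> \<le> e * norm h"
      proof -
        have "(1/2::real)^n \<le> (1/2)^N" using n by (intro power_decreasing) auto
        then have "(1/2::real)^n \<le> e / (Cg + 1)" using N by linarith
        then have "(1/2::real)^n * Cg \<le> e / (Cg + 1) * Cg" using Cg_nn by (intro mult_right_mono) auto
        also have "\<dots> \<le> e" using e Cg_nn by (simp add: field_simps)
        finally show ?thesis by (intro mult_right_mono) auto
      qed
      finally show "norm (sum (\<lambda>i. f' i q h) {..<n} - g' q h) \<le> e * norm h" .
    qed
  qed
  have z: "(0,0,0) \<in> Om" unfolding Om_iff using alpha R by simp
  have s0: "(\<lambda>n. f n (0,0,0)) sums 0" unfolding f_def by (simp add: itr_zero_a Ew_def)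
  obtain g where g: "\<And>x. x \<in> Om \<Longrightarrow> (\<lambda>n. f n x) sums (g x) \<and> (g has_derivative g' x) (at x within Om)"
  proof -
    have dd: "\<And>n x. x \<in> Om \<Longrightarrow> (f n has_derivative f' n x) (at x within Om)"
      using f'P has_derivative_at_withinI by blast
    show ?thesis using has_derivative_series[OF Om_convex dd unif z s0] that by blast
  qed
  show ?thesis unfolding hol3_def2
  proof
    fix q assume q: "q \<in> Om"
    have gq: "g y = Hs c y" if "y \<in> Om" for y
      using g[OF that] unfolding Hs_def f_def by (simp add: sums_iff)
    have "(g has_derivative g' q) (at q)" using g[OF q] at_within_open[OF q Om_open] by simp
    then have "(Hs c has_derivative g' q) (at q)"
      by (rule has_derivative_transform_within_open[OF _ Om_open q gq])
    moreover have "clin (g' q)"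
      unfolding clin_def g'_def
    proof (intro allI)
      fix w v
      have "(\<Sum>k. f' k q (cscale3 w v)) = (\<Sum>k. w * f' k q v)"
      proof (rule suminf_cong)
        fix k show "f' k q (cscale3 w v) = w * f' k q v" using f'P[OF q, of k] unfolding clin_def by blast
      qed
      also have "\<dots> = w * (\<Sum>k. f' k q v)" by (rule suminf_mult[OF fsum[OF q]])
      finally show "(\<Sum>k. f' k q (cscale3 w v)) = w * (\<Sum>k. f' k q v)" .
    qed
    ultimately show "\<exists>L. (Hs c has_derivative L) (at q) \<and> clin L" by blast
  qed
qed

end


lemma Dminus_char:
  assumes "R > 0" "\<alpha> > 0" "n \<ge> 1"
  shows "Dminus c R \<alpha> n = {z. cmod (snd (snd z)) < R
     \<and> cmod (snd (snd z)) ^ (2^(n-1)) * cmod (fst (PP c z n)) < cmod (snd (PP c z n))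
     \<and> \<alpha> * cmod (snd (snd z)) ^ sgm n < cmod (snd (PP c z n))}"
proof (rule set_eqI)
  fix z :: "complex \<times> complex \<times> complex"
  obtain x y a where z: "z = (x,y,a)" by (cases z)
  have sg0: "sgm n \<noteq> 0" using sgm_pos[OF assms(3)] by simp
  have t0: "(2::nat)^(n-1) \<noteq> 0" by simp
  show "z \<in> Dminus c R \<alpha> n \<longleftrightarrow> z \<in> {z. cmod (snd (snd z)) < R
     \<and> cmod (snd (snd z)) ^ (2^(n-1)) * cmod (fst (PP c z n)) < cmod (snd (PP c z n))
     \<and> \<alpha> * cmod (snd (snd z)) ^ sgm n < cmod (snd (PP c z n))}"
  proof (cases "a = 0")
    case True
    have P: "snd (PP c (x,y,0) n) = (pq c y - x)^(2^(n-1))" by (rule PP_zero[OF assms(3)])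
    show ?thesis unfolding z Dminus_def using True assms sg0 t0 by (simp add: P zero_power)
  next
    case False
    obtain X Y where XY: "(henon_inv c a ^^ n) (x,y) = (X,Y)" by (cases "(henon_inv c a ^^ n) (x,y)")
    have pos: "cmod a ^ sgm n > 0" using False by simp
    have P: "PP c (x,y,a) n = (a^ tau n * X, a^ sgm n * Y)" using PP_inv[OF False, of c x y n] XY by simp
    have e1: "cmod a ^ (2^(n-1)) * cmod (a ^ tau n * X) = cmod a ^ sgm n * cmod X"
      using tau_sg[OF assms(3)] by (simp add: norm_mult norm_power power_add[symmetric] mult.assoc[symmetric])
    have e2: "cmod (a ^ sgm n * Y) = cmod a ^ sgm n * cmod Y" by (simp add: norm_mult norm_power)
    have "z \<in> Dminus c R \<alpha> n \<longleftrightarrow> cmod a < R \<and> cmod X < cmod Y \<and> \<alpha> < cmod Y"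
      unfolding z Dminus_def using False in_image_henon[OF False] XY
      by (auto simp: Vminus_def)
    also have "\<dots> \<longleftrightarrow> cmod a < R \<and> cmod a ^ sgm n * cmod X < cmod a ^ sgm n * cmod Y
        \<and> \<alpha> * cmod a ^ sgm n < cmod a ^ sgm n * cmod Y"
      using pos by (simp add: mult.commute)
    also have "\<dots> \<longleftrightarrow> z \<in> {z. cmod (snd (snd z)) < R
     \<and> cmod (snd (snd z)) ^ (2^(n-1)) * cmod (fst (PP c z n)) < cmod (snd (PP c z n))
     \<and> \<alpha> * cmod (snd (snd z)) ^ sgm n < cmod (snd (PP c z n))}"
      unfolding z using e1 e2 P by simp
    finally show ?thesis .
  qed
qed

lemma PP_hol: "holomorphic3_on (\<lambda>z. fst (PP c z m)) S \<and> holomorphic3_on (\<lambda>z. snd (PP c z m)) S"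
proof (induction m)
  case 0
  then show ?case using hol3_x hol3_y by simp
next
  case (Suc m)
  then show ?case
    by (simp only: PP.simps fst_conv snd_conv)
       (intro conjI hol3_diff hol3_add hol3_mult hol3_power hol3_const hol3_a; simp)
qed

lemma cont_PP: "continuous_on UNIV (\<lambda>z. fst (PP c z m))" "continuous_on UNIV (\<lambda>z. snd (PP c z m))"
  using PP_hol[of c m UNIV] hol3_continuous by (auto intro!: continuous_at_imp_continuous_on)

lemma Dminus_open:
  assumes "R > 0" "\<alpha> > 0" "n \<ge> 1"
  shows "open (Dminus c R \<alpha> n)"
  unfolding Dminus_char[OF assms]
  using cont_PP[of c n] continuous_on_Pair[OF cont_PP(1)[of c n] cont_PP(2)[of c n]]
  by (intro open_Collect_conj open_Collect_less continuous_intros) auto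



definition u0 :: "complex \<Rightarrow> nat \<Rightarrow> complex \<times> complex \<times> complex \<Rightarrow> complex" where
  "u0 c n z = snd (snd z) ^ sgm n / snd (PP c z n)"
definition r0 :: "complex \<Rightarrow> nat \<Rightarrow> complex \<times> complex \<times> complex \<Rightarrow> complex" where
  "r0 c n z = snd (snd z) ^ (2^(n-1)) * fst (PP c z n) / snd (PP c z n)"
definition Phi :: "complex \<Rightarrow> nat \<Rightarrow> complex \<times> complex \<times> complex \<Rightarrow> complex" where
  "Phi c n z = snd (PP c z n) * exp (Hs c (u0 c n z, r0 c n z, snd (snd z)))"

context hs begin

lemma Phi_hol:
  assumes n: "n \<ge> 1"
  shows "holomorphic3_on (Phi c n) (Dminus c R \<alpha> n)"
proof -
  define D' where "D' = {z. snd (PP c z n) \<noteq> 0 \<and> (u0 c n z, r0 c n z, snd (snd z)) \<in> Om}"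
  have h1: "holomorphic3_on (\<lambda>z. u0 c n z) D'" unfolding u0_def
    by (rule hol3_divide[OF hol3_power[OF hol3_a] PP_hol[THEN conjunct2]]) (simp add: D'_def)
  have h2: "holomorphic3_on (\<lambda>z. r0 c n z) D'" unfolding r0_def
    by (rule hol3_divide[OF hol3_mult[OF hol3_power[OF hol3_a] PP_hol[THEN conjunct1]] PP_hol[THEN conjunct2]])
       (simp add: D'_def)
  have h3: "holomorphic3_on (\<lambda>z. Hs c (u0 c n z, r0 c n z, snd (snd z))) D'"
    by (rule hol3_compose3[OF Hs_hol h1 h2 hol3_a]) (simp add: D'_def)
  have "holomorphic3_on (Phi c n) D'" unfolding Phi_def
    by (intro hol3_mult hol3_exp h3 PP_hol[THEN conjunct2])
  moreover have "Dminus c R \<alpha> n \<subseteq> D'"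
  proof
    fix z assume "z \<in> Dminus c R \<alpha> n"
    then have z: "cmod (snd (snd z)) < R"
     "cmod (snd (snd z)) ^ (2^(n-1)) * cmod (fst (PP c z n)) < cmod (snd (PP c z n))"
     "\<alpha> * cmod (snd (snd z)) ^ sgm n < cmod (snd (PP c z n))"
      unfolding Dminus_char[OF R alpha n] by auto
    have "0 \<le> \<alpha> * cmod (snd (snd z)) ^ sgm n" using alpha by simp
    then have P: "cmod (snd (PP c z n)) > 0" using z(3) by linarith
    have "cmod (u0 c n z) < 1/\<alpha>"
      unfolding u0_def norm_divide norm_power using z(3) P alpha by (simp add: field_simps)
    moreover have "cmod (r0 c n z) < 1"
      unfolding r0_def norm_divide norm_mult norm_power using z(2) P by simp
    ultimately show "z \<in> D'" unfolding D'_def Om_iff using z(1) P by auto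
  qed
  ultimately show ?thesis by (rule hol3_subset)
qed

lemma Vminus_step:
  assumes "w \<in> Vminus \<alpha>" "a \<noteq> 0" "cmod a < R"
  shows "henon_inv c a w \<in> Vminus \<alpha>"
proof -
  obtain X Y where w: "w = (X, Y)" by (cases w)
  have V: "cmod Y > cmod X" "cmod Y > \<alpha>" using assms(1) w unfolding Vminus_def by auto
  have "cmod (pq c Y - X) \<ge> cmod (pq c Y) - cmod X" by (rule norm_triangle_ineq2)
  then have big: "cmod (pq c Y - X) > 2 * R * cmod Y" using A6[of Y] V by (simp add: algebra_simps)
  have "2 * R * cmod Y \<ge> 2 * cmod a * cmod Y" using assms(3) by (simp add: mult_right_mono)
  then have "cmod (pq c Y - X) > 2 * cmod a * cmod Y" using big by linarith
  then have "cmod ((pq c Y - X) / a) > 2 * cmod Y" using assms(2) by (simp add: norm_divide field_simps)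
  then have "cmod ((pq c Y - X) / a) > cmod Y" "cmod ((pq c Y - X) / a) > \<alpha>" using V alpha by linarith+
  then show ?thesis using V unfolding w henon_inv_def Vminus_def by auto
qed

lemma Vminus_orbit:
  assumes "w \<in> Vminus \<alpha>" "a \<noteq> 0" "cmod a < R"
  shows "(henon_inv c a ^^ k) w \<in> Vminus \<alpha>"
  by (induction k) (use assms Vminus_step in auto)

lemma itr_orbit:
  assumes w: "w \<in> Vminus \<alpha>" and a: "a \<noteq> 0" "cmod a < R"
  shows "itr c (1 / snd w, fst w / snd w, a) k
     = (1 / snd ((henon_inv c a ^^ k) w), fst ((henon_inv c a ^^ k) w) / snd ((henon_inv c a ^^ k) w))"
proof (induction k)
  case 0 then show ?case by (simp add: itr_def)
next
  case (Suc k)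
  obtain X Y where XY: "(henon_inv c a ^^ k) w = (X, Y)" by (cases "(henon_inv c a ^^ k) w")
  have V1: "(X,Y) \<in> Vminus \<alpha>" using Vminus_orbit[OF w a, of k] XY by simp
  have V2: "henon_inv c a (X,Y) \<in> Vminus \<alpha>" using Vminus_step[OF V1 a] .
  have Y0: "Y \<noteq> 0" using V1 alpha unfolding Vminus_def by auto
  define Y' where "Y' = (pq c Y - X) / a"
  have Y'0: "Y' \<noteq> 0" using V2 alpha unfolding Vminus_def henon_inv_def Y'_def by auto
  have W: "Wf c (1/Y) (X/Y) = a * Y' / Y^2"
    using a Y0 unfolding Wf_def Y'_def pq_def by (simp add: field_simps power2_eq_square)
  have Wn: "Wf c (1/Y) (X/Y) \<noteq> 0" using a Y0 Y'0 W by simp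
  have "Fm c a (1/Y, X/Y) = (1/Y', Y/Y')"
    unfolding Fm_def using W Wn a Y0 Y'0 by (simp add: field_simps power2_eq_square)
  moreover have "(henon_inv c a ^^ Suc k) w = (Y, Y')" using XY unfolding Y'_def by (simp add: henon_inv_def)
  ultimately show ?case using Suc XY by (simp add: itr_Suc)
qed

lemma Phi_eq:
  assumes n: "n \<ge> 1" and a: "0 < cmod a" "cmod a < R" and xy: "(x,y) \<in> (henon c a ^^ n) ` Vminus \<alpha>"
  shows "Phi c n (x,y,a) = a ^ (\<Sum>k<n. 2^k) * phi_minus c a ((henon_inv c a ^^ n) (x,y))"
proof -
  have a0: "a \<noteq> 0" using a by auto
  define w where "w = (henon_inv c a ^^ n) (x,y)"
  have w: "w \<in> Vminus \<alpha>" using in_image_henon[OF a0] xy unfolding w_def by blast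
  obtain X Y where XY: "w = (X, Y)" by (cases w)
  have Y0: "Y \<noteq> 0" using w XY alpha unfolding Vminus_def by auto
  have P: "PP c (x,y,a) n = (a ^ tau n * X, a ^ sgm n * Y)" using PP_inv[OF a0, of c x y n] XY w_def by simp
  have u: "u0 c n (x,y,a) = 1 / Y" unfolding u0_def P using a0 Y0 by simp
  have r: "r0 c n (x,y,a) = X / Y" unfolding r0_def P using a0 Y0 tau_sg[OF n]
    by (simp add: power_add[symmetric] mult.assoc[symmetric])
  have Hs: "Hs c (1/Y, X/Y, a) = (\<Sum>k. (1/2)^Suc k * Ln (a * yback c a w (Suc k) / (yback c a w k)^2))"
    unfolding Hs_def
  proof (rule suminf_cong)
    fix k
    obtain Xk Yk where XYk: "(henon_inv c a ^^ k) w = (Xk, Yk)" by (cases "(henon_inv c a ^^ k) w")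
    have V1: "(Xk,Yk) \<in> Vminus \<alpha>" using Vminus_orbit[OF w a0 a(2), of k] XYk by simp
    have Yk0: "Yk \<noteq> 0" using V1 alpha unfolding Vminus_def by auto
    have it: "itr c (1/Y, X/Y, a) k = (1/Yk, Xk/Yk)" using itr_orbit[OF w a0 a(2), of k] XY XYk by simp
    have yb: "yback c a w k = Yk" "yback c a w (Suc k) = (pq c Yk - Xk) / a"
      unfolding yback_def using XYk by (simp_all add: henon_inv_def)
    have "1 + Ew c (1/Yk, Xk/Yk) = a * ((pq c Yk - Xk) / a) / Yk^2"
      using a0 Yk0 unfolding Ew_def pq_def by (simp add: field_simps power2_eq_square)
    then show "(1/2)^Suc k * Ln (1 + Ew c (itr c (1/Y, X/Y, a) k)) = (1/2)^Suc k * Ln (a * yback c a w (Suc k) / (yback c a w k)^2)"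
      using it yb by simp
  qed
  have "Phi c n (x,y,a) = a ^ sgm n * Y * exp (Hs c (1/Y, X/Y, a))"
    unfolding Phi_def u r using P by simp
  also have "\<dots> = a ^ (\<Sum>k<n. 2^k) * phi_minus c a w"
    unfolding Hs phi_minus_def XY sgm_def by simp
  finally show ?thesis unfolding w_def .
qed

lemma Phi_zero:
  assumes n: "n \<ge> 1" and xy: "pq c y \<noteq> x"
  shows "Phi c n (x,y,0) = (pq c y - x) ^ (2^(n-1))"
proof -
  have sg0: "sgm n \<noteq> 0" using sgm_pos[OF n] by simp
  have "u0 c n (x,y,0) = 0" unfolding u0_def using sg0 by (simp add: zero_power)
  moreover have "r0 c n (x,y,0) = 0" unfolding r0_def by (simp add: zero_power)
  moreover have "Hs c (0, 0, 0) = 0" unfolding Hs_def by (simp add: itr_zero_a Ew_def)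
  ultimately show ?thesis unfolding Phi_def using PP_zero[OF n] by simp
qed

end

theorem lemma4p10:
  fixes c :: complex and R \<rho> \<alpha> :: real and n :: nat
  assumes "R > 0" and "0 < \<rho>" and "\<rho> < 1" and "\<alpha> > 0"
    and "\<And>y. cmod y \<ge> \<alpha> \<Longrightarrow> cmod c / (cmod y)^2 + (R + 1) / cmod y < \<rho>"
    and "\<And>y. cmod y \<ge> \<alpha> \<Longrightarrow> cmod (pq c y) > (2 * R + 1) * cmod y"
    and "n \<ge> 1"
  shows "open (Dminus c R \<alpha> n) \<and>
    (\<exists>\<Phi>. holomorphic3_on \<Phi> (Dminus c R \<alpha> n)
       \<and> (\<forall>x y a. 0 < cmod a \<and> cmod a < R \<and> (x,y) \<in> (henon c a ^^ n) ` Vminus \<alpha> \<longrightarrow>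
             \<Phi> (x,y,a) = a ^ (\<Sum>k<n. 2^k) * phi_minus c a ((henon_inv c a ^^ n) (x,y)))
       \<and> (\<forall>x y. pq c y \<noteq> x \<longrightarrow> \<Phi> (x,y,0) = (pq c y - x) ^ (2^(n-1))))"
proof -
  interpret hs c R \<rho> \<alpha>
    using assms(1-6) by unfold_locales auto
  show ?thesis
    using Dminus_open[OF assms(1) assms(4) assms(7)] Phi_hol[OF assms(7)] Phi_eq[OF assms(7)] Phi_zero[OF assms(7)]
    by blast
qed


end
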